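(* Let $V$ be a real vector space of dimension $m$, $\Gamma$ a finitely generated free abelian dense subgroup of $V$ acting by translations, and $\mathcal C$ a countable $\Gamma$-invariant collection of affine hyperplanes with finitely many $\Gamma$-orbits and normals spanning $V$. Suppose there are $W_1,\dots,W_m\in\mathcal C$ intersecting in a single point $p$ and a subset $A\subset\{1,\dots,m\}$ such that $\Gamma^A$ has infinite index in $\Gamma_A$ (equivalently $\mathrm{rk}\,\Gamma^A<\mathrm{rk}\,\Gamma_A$). Then $\mathcal P$ consists of infinitely many $\Gamma$-orbits.
   Context: $\mathcal P$ is the set of points of $V$ that are $0$-dimensional intersections of $m$ elements of $\mathcal C$. For $A\subset\{1,\dots,m\}$, $W_A=\bigcap_{i\in A}W_i$ (with $W_\emptyset=V$), $A^c=\{1,\dots,m\}\setminus A$, $\Gamma^A\subset\Gamma$ is the stabilizer of $W_A$, and $\Gamma_A=\{x\in V:\exists\gamma\in\Gamma,\ \{x+p\}=W_A\cap(W_{A^c}+\gamma)\}$, which is a group containing $\Gamma^A$. *)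

theory Defs
  imports "HOL-Analysis.Analysis"
begin

definition int_combs :: "'a::real_vector set \<Rightarrow> 'a set" where
  "int_combs S = {(\<Sum>s\<in>S. real_of_int (c s) *\<^sub>R s) | c. True}"

definition fg_free_abelian_subgroup :: "'a::real_vector set \<Rightarrow> bool" where
  "fg_free_abelian_subgroup \<Gamma> \<longleftrightarrow>
     (\<exists>S. finite S \<and> \<Gamma> = int_combs S \<and>
        (\<forall>c. (\<Sum>s\<in>S. real_of_int (c s) *\<^sub>R s) = 0 \<longrightarrow> (\<forall>s\<in>S. c s = 0)))"

definition hyperplane_with_normal :: "'a::real_inner \<Rightarrow> 'a set \<Rightarrow> bool" where
  "hyperplane_with_normal a H \<longleftrightarrow> a \<noteq> 0 \<and> (\<exists>b. H = {x. a \<bullet> x = b})"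

definition affine_hyperplane :: "'a::real_inner set \<Rightarrow> bool" where
  "affine_hyperplane H \<longleftrightarrow> (\<exists>a. hyperplane_with_normal a H)"

definition normals :: "'a::real_inner set set \<Rightarrow> 'a set" where
  "normals C = {a. \<exists>H\<in>C. hyperplane_with_normal a H}"

definition orbit_set :: "'a::real_vector set \<Rightarrow> 'a set \<Rightarrow> 'a set set" where
  "orbit_set \<Gamma> H = {(\<lambda>x. x + \<gamma>) ` H | \<gamma>. \<gamma> \<in> \<Gamma>}"

definition orbit_pt :: "'a::real_vector set \<Rightarrow> 'a \<Rightarrow> 'a set" where
  "orbit_pt \<Gamma> x = {x + \<gamma> | \<gamma>. \<gamma> \<in> \<Gamma>}"

definition pts_P :: "nat \<Rightarrow> 'a set set \<Rightarrow> 'a set" where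
  "pts_P m C = {x. \<exists>U::nat \<Rightarrow> 'a set. (\<forall>i\<in>{1..m}. U i \<in> C) \<and> (\<Inter>i\<in>{1..m}. U i) = {x}}"

text \<open>W_A (with W_{} = V, the empty intersection being UNIV).\<close>
definition W_of :: "(nat \<Rightarrow> 'a set) \<Rightarrow> nat set \<Rightarrow> 'a set" where
  "W_of W A = (\<Inter>i\<in>A. W i)"

definition Gamma_up :: "'a::real_vector set \<Rightarrow> (nat \<Rightarrow> 'a set) \<Rightarrow> nat set \<Rightarrow> 'a set" where
  "Gamma_up \<Gamma> W A = {\<gamma>\<in>\<Gamma>. (\<lambda>x. x + \<gamma>) ` W_of W A = W_of W A}"

definition Gamma_low :: "'a::real_vector set \<Rightarrow> (nat \<Rightarrow> 'a set) \<Rightarrow> nat \<Rightarrow> 'a \<Rightarrow> nat set \<Rightarrow> 'a set" where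
  "Gamma_low \<Gamma> W m p A = {x. \<exists>\<gamma>\<in>\<Gamma>.
      {x + p} = W_of W A \<inter> ((\<lambda>y. y + \<gamma>) ` W_of W ({1..m} - A))}"

definition infinite_index :: "'a::real_vector set \<Rightarrow> 'a set \<Rightarrow> bool" where
  "infinite_index H G \<longleftrightarrow> infinite {(\<lambda>h. x + h) ` H | x. x \<in> G}"

end

theory Submission
  imports Defs
begin

lemma trans_INT:
  fixes g :: "'a::real_vector"
  shows "(\<lambda>x. x + g) ` (\<Inter>i\<in>S. B i) = (\<Inter>i\<in>S. (\<lambda>x. x + g) ` B i)"
proof (rule bij_image_INT)
  show "bij (\<lambda>x::'a. x + g)"
    by (rule bijI) (auto simp: inj_def image_iff intro!: exI[of _ "_ - g"])
qed

lemma trans_Int: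
  fixes g :: "'a::real_vector"
  shows "(\<lambda>x. x + g) ` (X \<inter> Y) = (\<lambda>x. x + g) ` X \<inter> (\<lambda>x. x + g) ` Y"
  by (rule image_Int) (auto simp: inj_def)

lemma trans_comp:
  fixes g h :: "'a::real_vector"
  shows "(\<lambda>x. x + h) ` ((\<lambda>x. x + g) ` X) = (\<lambda>x. x + (g + h)) ` X"
  by (auto simp: image_iff add.assoc)

lemma Gamma_add:
  assumes "fg_free_abelian_subgroup \<Gamma>" "a \<in> \<Gamma>" "b \<in> \<Gamma>"
  shows "a + b \<in> \<Gamma>"
proof -
  obtain S where S: "finite S" "\<Gamma> = int_combs S"
    using assms(1) unfolding fg_free_abelian_subgroup_def by blast
  obtain c where c: "a = (\<Sum>s\<in>S. real_of_int (c s) *\<^sub>R s)"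
    using assms(2) S unfolding int_combs_def by blast
  obtain d where d: "b = (\<Sum>s\<in>S. real_of_int (d s) *\<^sub>R s)"
    using assms(3) S unfolding int_combs_def by blast
  have "a + b = (\<Sum>s\<in>S. real_of_int (c s + d s) *\<^sub>R s)"
    by (simp add: c d sum.distrib[symmetric] scaleR_add_left)
  then show ?thesis using S unfolding int_combs_def by (auto intro!: exI[of _ "\<lambda>s. c s + d s"])
qed

lemma hyp_trans:
  assumes "affine_hyperplane H" "a \<in> H" "b \<in> H"
  shows "(\<lambda>y. y + (a - b)) ` H = H"
proof -
  obtain n c where H: "H = {x. n \<bullet> x = c}"
    using assms(1) unfolding affine_hyperplane_def hyperplane_with_normal_def by blast
  have ab: "n \<bullet> a = c" "n \<bullet> b = c" using assms H by auto
  show ?thesis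
  proof
    show "(\<lambda>y. y + (a - b)) ` H \<subseteq> H"
      using ab by (auto simp: H inner_diff_right inner_add_right)
    show "H \<subseteq> (\<lambda>y. y + (a - b)) ` H"
    proof
      fix y assume "y \<in> H"
      then have "y - (a - b) \<in> H" using ab by (auto simp: H inner_diff_right)
      then show "y \<in> (\<lambda>y. y + (a - b)) ` H" by (auto simp: image_iff intro!: bexI[of _ "y - (a - b)"])
    qed
  qed
qed

theorem mainTheorem7:
  fixes \<Gamma> :: "'a::euclidean_space set"
    and C :: "'a set set"
    and m :: nat
    and W :: "nat \<Rightarrow> 'a set"
    and p :: 'a
    and A :: "nat set"
  assumes dim: "DIM('a) = m"
    and Gamma_fg: "fg_free_abelian_subgroup \<Gamma>"
    and Gamma_dense: "closure \<Gamma> = UNIV"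
    and C_hyp: "\<forall>H\<in>C. affine_hyperplane H"
    and C_countable: "countable C"
    and C_inv: "\<forall>H\<in>C. \<forall>\<gamma>\<in>\<Gamma>. (\<lambda>x. x + \<gamma>) ` H \<in> C"
    and C_orbits: "finite {orbit_set \<Gamma> H | H. H \<in> C}"
    and C_normals: "span (normals C) = UNIV"
    and W_in: "\<forall>i\<in>{1..m}. W i \<in> C"
    and W_point: "(\<Inter>i\<in>{1..m}. W i) = {p}"
    and A_sub: "A \<subseteq> {1..m}"
    and A_index: "infinite_index (Gamma_up \<Gamma> W A) (Gamma_low \<Gamma> W m p A)"
  shows "infinite {orbit_pt \<Gamma> x | x. x \<in> pts_P m C}"
proof
  assume fin: "finite {orbit_pt \<Gamma> x | x. x \<in> pts_P m C}"
  define GA where "GA = Gamma_low \<Gamma> W m p A"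
  define GU where "GU = Gamma_up \<Gamma> W A"
  define WA where "WA = W_of W A"
  define WAc where "WAc = W_of W ({1..m} - A)"
  define Orb where "Orb = {orbit_pt \<Gamma> x | x. x \<in> pts_P m C}"
  define G where "G Q = {z \<in> GA. z + p \<in> Q}" for Q
  have GA_iff: "x \<in> GA \<longleftrightarrow> (\<exists>\<gamma>\<in>\<Gamma>. {x + p} = WA \<inter> (\<lambda>y. y + \<gamma>) ` WAc)" for x
    unfolding GA_def Gamma_low_def WA_def WAc_def by simp
  have GU_iff: "h \<in> GU \<longleftrightarrow> h \<in> \<Gamma> \<and> (\<lambda>x. x + h) ` WA = WA" for h
    unfolding GU_def Gamma_up_def WA_def by simp
  have inWA: "x + p \<in> WA" if "x \<in> GA" for x
    using that GA_iff[of x] by auto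
  have inP: "x + p \<in> pts_P m C" if xGA: "x \<in> GA" for x
  proof -
    obtain \<gamma> where g: "\<gamma> \<in> \<Gamma>" "{x + p} = WA \<inter> (\<lambda>y. y + \<gamma>) ` WAc"
      using xGA GA_iff[of x] by auto
    define U where "U i = (if i \<in> A then W i else (\<lambda>y. y + \<gamma>) ` W i)" for i
    have "\<forall>i\<in>{1..m}. U i \<in> C" using W_in C_inv g(1) by (auto simp: U_def)
    moreover have "(\<Inter>i\<in>{1..m}. U i) = WA \<inter> (\<lambda>y. y + \<gamma>) ` WAc"
    proof -
      have split: "{1..m} = A \<union> ({1..m} - A)" using A_sub by blast
      have e1: "(\<Inter>i\<in>{1..m}. U i) = (\<Inter>i\<in>A. U i) \<inter> (\<Inter>i\<in>{1..m} - A. U i)"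
        using split INT_Un by metis
      have e2: "(\<Inter>i\<in>A. U i) = WA" by (simp add: U_def WA_def W_of_def)
      have e3: "(\<Inter>i\<in>{1..m} - A. U i) = (\<Inter>i\<in>{1..m} - A. (\<lambda>y. y + \<gamma>) ` W i)"
        by (simp add: U_def)
      have e4: "(\<Inter>i\<in>{1..m} - A. (\<lambda>y. y + \<gamma>) ` W i) = (\<lambda>y. y + \<gamma>) ` WAc"
        unfolding WAc_def W_of_def by (rule trans_INT[symmetric])
      show ?thesis using e1 e2 e3 e4 by simp
    qed
    ultimately show ?thesis unfolding pts_P_def using g(2) by auto
  qed
  have cos: "{(\<lambda>h. x + h) ` GU | x. x \<in> GA} \<subseteq> G ` Orb"
  proof
    fix T assume "T \<in> {(\<lambda>h. x + h) ` GU | x. x \<in> GA}"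
    then obtain x where x: "x \<in> GA" "T = (\<lambda>h. x + h) ` GU" by blast
    have Oo: "orbit_pt \<Gamma> (x + p) \<in> Orb" using inP[OF x(1)] Orb_def by blast
    have "G (orbit_pt \<Gamma> (x + p)) = T"
    proof
      show "G (orbit_pt \<Gamma> (x + p)) \<subseteq> T"
      proof
        fix z assume "z \<in> G (orbit_pt \<Gamma> (x + p))"
        then obtain g where z: "z \<in> GA" "g \<in> \<Gamma>" "z + p = x + p + g"
          unfolding G_def orbit_pt_def by blast
        have hg: "z - x = g" using z(3) by (simp add: algebra_simps)
        have "(\<lambda>y. y + (z - x)) ` W i = W i" if "i \<in> A" for i
        proof -
          have "(z + p) - (x + p) = z - x" by simp
          moreover have "(\<lambda>y. y + ((z + p) - (x + p))) ` W i = W i"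
            apply (rule hyp_trans)
            using C_hyp W_in A_sub that inWA[OF z(1)] inWA[OF x(1)]
            by (auto simp: WA_def W_of_def)
          ultimately show ?thesis by simp
        qed
        then have "(\<lambda>y. y + (z - x)) ` WA = WA"
          unfolding WA_def W_of_def trans_INT by simp
        then have "z - x \<in> GU" using GU_iff hg z(2) by simp
        then show "z \<in> T" using x(2) by (auto simp: image_iff intro!: bexI[of _ "z - x"])
      qed
      show "T \<subseteq> G (orbit_pt \<Gamma> (x + p))"
      proof
        fix z assume "z \<in> T"
        then obtain h where h: "h \<in> GU" "z = x + h" using x(2) by blast
        have hG: "h \<in> \<Gamma>" and hW: "(\<lambda>y. y + h) ` WA = WA" using h(1) GU_iff by auto
        obtain \<gamma> where g: "\<gamma> \<in> \<Gamma>" "{x + p} = WA \<inter> (\<lambda>y. y + \<gamma>) ` WAc"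
          using x(1) GA_iff by blast
        have "(\<lambda>y. y + h) ` {x + p} = WA \<inter> (\<lambda>y. y + (\<gamma> + h)) ` WAc"
          unfolding g(2) trans_Int hW trans_comp ..
        then have "{z + p} = WA \<inter> (\<lambda>y. y + (\<gamma> + h)) ` WAc"
          using h(2) by (simp add: algebra_simps)
        moreover have "\<gamma> + h \<in> \<Gamma>" using Gamma_add[OF Gamma_fg g(1) hG] .
        ultimately have "z \<in> GA" using GA_iff by blast
        moreover have "z + p \<in> orbit_pt \<Gamma> (x + p)"
          using hG h(2) unfolding orbit_pt_def by (auto simp: algebra_simps)
        ultimately show "z \<in> G (orbit_pt \<Gamma> (x + p))" unfolding G_def by blast
      qed
    qed
    then show "T \<in> G ` Orb" using Oo by blast
  qed
  have "finite (G ` Orb)" using fin Orb_def by simp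
  then have "finite {(\<lambda>h. x + h) ` GU | x. x \<in> GA}" using cos finite_subset by blast
  then show False using A_index unfolding infinite_index_def GU_def GA_def by simp
qed

end
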